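(* Let $A=\{a_0,a_1,\dots,a_{k-1}\}\subseteq\mathcal{C}_n$ with $a_0<\dots<a_{k-1}$. Then the layer $\mathcal{L}^{a_0+1}_{a_0}\left(\sigma^{(n)}_k(A)\right)$ is a subsemiring of the simplex $\sigma^{(n)}_k(A)$.
   Context: $\mathcal{C}_n=\{0,1,\dots,n-1\}$ with its usual order; $\widehat{\mathcal{E}}_{\mathcal{C}_n}$ is the set of all order-preserving maps $\mathcal{C}_n\to\mathcal{C}_n$ (not required to fix $0$), a semiring with $(\alpha+\beta)(x)=\max(\alpha(x),\beta(x))$ and $(\alpha\cdot\beta)(x)=\beta(\alpha(x))$. The simplex $\sigma^{(n)}_k(A)$ is the set of all $\alpha\in\widehat{\mathcal{E}}_{\mathcal{C}_n}$ with $\mathrm{im}(\alpha)\subseteq A$. The layer $\mathcal{L}^{s}_{a_0}\left(\sigma^{(n)}_k(A)\right)$ is the set of $\alpha\in\sigma^{(n)}_k(A)$ with exactly $s$ elements $i\in\mathcal{C}_n$ satisfying $\alpha(i)=a_0$. *)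

theory Defs
  imports Main
begin

text \<open>C_n = {0..<n}. Maps C_n -> C_n are represented as functions nat => nat
  that are 0 outside {0..<n} (extensional convention).\<close>

definition Ehat :: "nat \<Rightarrow> (nat \<Rightarrow> nat) set" where
  "Ehat n = {\<alpha>. (\<forall>x<n. \<alpha> x < n) \<and> (\<forall>x y. x \<le> y \<and> y < n \<longrightarrow> \<alpha> x \<le> \<alpha> y)
                \<and> (\<forall>x. n \<le> x \<longrightarrow> \<alpha> x = 0)}"

definition eplus :: "nat \<Rightarrow> (nat \<Rightarrow> nat) \<Rightarrow> (nat \<Rightarrow> nat) \<Rightarrow> (nat \<Rightarrow> nat)" where
  "eplus n \<alpha> \<beta> = (\<lambda>x. if x < n then max (\<alpha> x) (\<beta> x) else 0)"

definition etimes :: "nat \<Rightarrow> (nat \<Rightarrow> nat) \<Rightarrow> (nat \<Rightarrow> nat) \<Rightarrow> (nat \<Rightarrow> nat)" where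
  "etimes n \<alpha> \<beta> = (\<lambda>x. if x < n then \<beta> (\<alpha> x) else 0)"

definition simplex :: "nat \<Rightarrow> nat set \<Rightarrow> (nat \<Rightarrow> nat) set" where
  "simplex n A = {\<alpha> \<in> Ehat n. \<alpha> ` {0..<n} \<subseteq> A}"

definition layer :: "nat \<Rightarrow> nat \<Rightarrow> nat \<Rightarrow> (nat \<Rightarrow> nat) set \<Rightarrow> (nat \<Rightarrow> nat) set" where
  "layer n s a S = {\<alpha> \<in> S. card {i \<in> {0..<n}. \<alpha> i = a} = s}"

definition subsemiring :: "nat \<Rightarrow> (nat \<Rightarrow> nat) set \<Rightarrow> (nat \<Rightarrow> nat) set \<Rightarrow> bool" where
  "subsemiring n T S \<longleftrightarrow> T \<subseteq> S \<and>
     (\<forall>\<alpha>\<in>T. \<forall>\<beta>\<in>T. eplus n \<alpha> \<beta> \<in> T \<and> etimes n \<alpha> \<beta> \<in> T)"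

end

theory Submission
  imports Defs
begin

lemma char_layer:
  assumes A: "A \<subseteq> {0..<n}" "A \<noteq> {}" and al: "\<alpha> \<in> simplex n A"
  shows "card {i \<in> {0..<n}. \<alpha> i = Min A} = Min A + 1 \<longleftrightarrow> (\<forall>i<n. \<alpha> i = Min A \<longleftrightarrow> i \<le> Min A)"
proof -
  let ?a = "Min A"
  have fA: "finite A" using A finite_subset by blast
  have aA: "?a \<in> A" using fA A by simp
  have an: "?a < n" using aA A by auto
  have mono: "\<And>x y. x \<le> y \<Longrightarrow> y < n \<Longrightarrow> \<alpha> x \<le> \<alpha> y" using al by (auto simp: simplex_def Ehat_def)
  have ge: "\<And>i. i < n \<Longrightarrow> ?a \<le> \<alpha> i"
  proof -
    fix i assume "i < n"
    then have "\<alpha> i \<in> A" using al by (auto simp: simplex_def)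
    then show "?a \<le> \<alpha> i" using fA by simp
  qed
  let ?S = "{i \<in> {0..<n}. \<alpha> i = ?a}"
  show ?thesis
  proof
    assume c: "card ?S = ?a + 1"
    show "\<forall>i<n. \<alpha> i = ?a \<longleftrightarrow> i \<le> ?a"
    proof (intro allI impI iffI)
      fix i assume i: "i < n" "\<alpha> i = ?a"
      show "i \<le> ?a"
      proof (rule ccontr)
        assume "\<not> i \<le> ?a"
        have "{0..i} \<subseteq> ?S"
        proof
          fix j assume "j \<in> {0..i}"
          then have "j \<le> i" "j < n" using i by auto
          then show "j \<in> ?S" using mono[of j i] ge[of j] i by auto
        qed
        then have "card {0..i} \<le> card ?S" by (intro card_mono) auto
        with c \<open>\<not> i \<le> ?a\<close> show False by simp
      qed
    next
      fix i assume i: "i < n" "i \<le> ?a"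
      show "\<alpha> i = ?a"
      proof (rule ccontr)
        assume ne: "\<alpha> i \<noteq> ?a"
        have "?S \<subseteq> {0..<i}"
        proof
          fix j assume j: "j \<in> ?S"
          show "j \<in> {0..<i}"
          proof (rule ccontr)
            assume "j \<notin> {0..<i}"
            then have "i \<le> j" by auto
            moreover have "j < n" using j by auto
            ultimately have "\<alpha> i \<le> \<alpha> j" using mono by blast
            with j ne ge[OF i(1)] show False by auto
          qed
        qed
        then have "card ?S \<le> card {0..<i}" by (intro card_mono) auto
        with c i show False by simp
      qed
    qed
  next
    assume h: "\<forall>i<n. \<alpha> i = ?a \<longleftrightarrow> i \<le> ?a"
    have "?S = {0..<?a+1}" using h an by auto
    then show "card ?S = ?a + 1" by simp
  qed
qed

theorem proposition8:
  fixes n k :: nat and A :: "nat set"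
  assumes "A \<subseteq> {0..<n}" and "A \<noteq> {}" and "card A = k"
  shows "subsemiring n (layer n (Min A + 1) (Min A) (simplex n A)) (simplex n A)"
proof -
  let ?a = "Min A"
  have fA: "finite A" using assms finite_subset by blast
  have aA: "?a \<in> A" using fA assms by simp
  have an: "?a < n" using aA assms by auto
  have ge: "\<And>\<alpha> i. \<alpha> \<in> simplex n A \<Longrightarrow> i < n \<Longrightarrow> ?a \<le> \<alpha> i"
  proof -
    fix \<alpha> i assume "\<alpha> \<in> simplex n A" "i < n"
    then have "\<alpha> i \<in> A" by (auto simp: simplex_def)
    then show "?a \<le> \<alpha> i" using fA by simp
  qed
  have L: "\<And>\<alpha>. \<alpha> \<in> layer n (?a + 1) ?a (simplex n A) \<longleftrightarrow>
      \<alpha> \<in> simplex n A \<and> (\<forall>i<n. \<alpha> i = ?a \<longleftrightarrow> i \<le> ?a)"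
    using char_layer[OF assms(1,2)] unfolding layer_def by blast
  show ?thesis
    unfolding subsemiring_def
  proof (intro conjI ballI)
    show "layer n (?a + 1) ?a (simplex n A) \<subseteq> simplex n A" by (auto simp: layer_def)
  next
    fix \<alpha> \<beta> assume a: "\<alpha> \<in> layer n (?a + 1) ?a (simplex n A)"
      and b: "\<beta> \<in> layer n (?a + 1) ?a (simplex n A)"
    have as: "\<alpha> \<in> simplex n A" and ac: "\<forall>i<n. \<alpha> i = ?a \<longleftrightarrow> i \<le> ?a" using a L by auto
    have bs: "\<beta> \<in> simplex n A" and bc: "\<forall>i<n. \<beta> i = ?a \<longleftrightarrow> i \<le> ?a" using b L by auto
    have gea: "\<And>i. i<n \<Longrightarrow> ?a \<le> \<alpha> i" using ge[OF as] .
    have geb: "\<And>i. i<n \<Longrightarrow> ?a \<le> \<beta> i" using ge[OF bs] .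
    have ps: "eplus n \<alpha> \<beta> \<in> simplex n A"
      unfolding simplex_def Ehat_def
    proof (intro CollectI conjI allI impI subsetI)
      fix x assume "x < n" then show "eplus n \<alpha> \<beta> x < n"
        using as bs by (auto simp: simplex_def Ehat_def eplus_def)
    next
      fix x y assume "x \<le> y \<and> y < n"
      then have "\<alpha> x \<le> \<alpha> y" "\<beta> x \<le> \<beta> y" using as bs by (auto simp: simplex_def Ehat_def)
      then show "eplus n \<alpha> \<beta> x \<le> eplus n \<alpha> \<beta> y" using \<open>x \<le> y \<and> y < n\<close>
        by (auto simp: eplus_def)
    next
      fix x assume "n \<le> x" then show "eplus n \<alpha> \<beta> x = 0" by (simp add: eplus_def)
    next
      fix y assume "y \<in> eplus n \<alpha> \<beta> ` {0..<n}"
      then obtain x where "x < n" "y = max (\<alpha> x) (\<beta> x)" by (auto simp: eplus_def)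
      moreover have "\<alpha> x \<in> A" "\<beta> x \<in> A" using as bs \<open>x < n\<close> by (auto simp: simplex_def)
      ultimately show "y \<in> A" by (simp add: max_def)
    qed
    have ts: "etimes n \<alpha> \<beta> \<in> simplex n A"
      unfolding simplex_def Ehat_def
    proof (intro CollectI conjI allI impI subsetI)
      fix x assume "x < n" then show "etimes n \<alpha> \<beta> x < n"
        using as bs by (auto simp: simplex_def Ehat_def etimes_def)
    next
      fix x y assume h: "x \<le> y \<and> y < n"
      then have "\<alpha> x \<le> \<alpha> y" "\<alpha> y < n" using as by (auto simp: simplex_def Ehat_def)
      then have "\<beta> (\<alpha> x) \<le> \<beta> (\<alpha> y)" using bs by (auto simp: simplex_def Ehat_def)
      then show "etimes n \<alpha> \<beta> x \<le> etimes n \<alpha> \<beta> y" using h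
        by (auto simp: etimes_def)
    next
      fix x assume "n \<le> x" then show "etimes n \<alpha> \<beta> x = 0" by (simp add: etimes_def)
    next
      fix y assume "y \<in> etimes n \<alpha> \<beta> ` {0..<n}"
      then obtain x where "x < n" "y = \<beta> (\<alpha> x)" by (auto simp: etimes_def)
      moreover have "\<alpha> x < n" using as \<open>x < n\<close> by (auto simp: simplex_def Ehat_def)
      ultimately show "y \<in> A" using bs by (auto simp: simplex_def)
    qed
    show "eplus n \<alpha> \<beta> \<in> layer n (?a + 1) ?a (simplex n A)"
      unfolding L
    proof (intro conjI ps allI impI)
      fix i assume i: "i < n"
      show "eplus n \<alpha> \<beta> i = ?a \<longleftrightarrow> i \<le> ?a"
        using ac bc gea[OF i] geb[OF i] i by (auto simp: eplus_def max_def)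
    qed
    show "etimes n \<alpha> \<beta> \<in> layer n (?a + 1) ?a (simplex n A)"
      unfolding L
    proof (intro conjI ts allI impI)
      fix i assume i: "i < n"
      have ain: "\<alpha> i < n" using as i by (auto simp: simplex_def Ehat_def)
      show "etimes n \<alpha> \<beta> i = ?a \<longleftrightarrow> i \<le> ?a"
        using ac bc gea[OF i] i ain an by (auto simp: etimes_def)
    qed
  qed
qed

end
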